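(* Let $n\ge1$ and let $\pi\in\mathfrak{S}_n$ be a two-stack sortable permutation. Write $\pi=\pi_\ell\cdot(n)\cdot\pi_r$, where $\pi_\ell$ (resp. $\pi_r$) is the part of $\pi$ before (resp. after) the entry $n$, and let $\pi_1=P(\pi_\ell)$, $\pi_2=P(\pi_r)$. Then each of $\pi_1,\pi_2$ is either the empty permutation or a two-stack sortable permutation.
   Context: For a finite sequence $A$ of distinct integers, the stack-sorting operator $\mathcal{S}$ is defined by $\mathcal{S}(\epsilon)=\epsilon$ for the empty sequence and, if $A$ is non-empty with largest element $m$, writing $A=A_L\cdot(m)\cdot A_R$ (concatenation), $\mathcal{S}(A)=\mathcal{S}(A_L)\cdot\mathcal{S}(A_R)\cdot(m)$. A permutation $\sigma\in\mathfrak{S}_n$ ($n\ge1$), viewed as a sequence, is two-stack sortable if $\mathcal{S}(\mathcal{S}(\sigma))$ is the identity; the empty permutation is not considered two-stack sortable. For a sequence $A$ of distinct integers, $P(A)$ is its standardization: the permutation of $\{1,\dots,\operatorname{len}(A)\}$ having the same relative order as $A$ (with $P(\epsilon)=\epsilon$). *)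

theory Defs
  imports Main
begin

text \<open>Finite sequences of distinct entries are modelled as lists over a linear order.
  The stack-sorting operator: S([]) = []; otherwise, with m the largest entry,
  A = A_L @ [m] @ A_R and S(A) = S(A_L) @ S(A_R) @ [m].
  For distinct lists, A_L = takeWhile (\<noteq> m) A and A_R = tl (dropWhile (\<noteq> m) A).\<close>

function stack_sort :: "'a::linorder list \<Rightarrow> 'a list" where
  "stack_sort A =
     (if A = [] then []
      else (let m = Max (set A)
            in stack_sort (takeWhile (\<lambda>x. x \<noteq> m) A)
               @ stack_sort (tl (dropWhile (\<lambda>x. x \<noteq> m) A)) @ [m]))"
  by pat_completeness auto
termination
proof (relation "measure length")
  fix A :: "'a list" and m
  assume A: "\<not> A = []" and m: "m = Max (set A)"
  have mem: "m \<in> set A" using A m by simp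
  show "(takeWhile (\<lambda>x. x \<noteq> m) A, A) \<in> measure length"
    using mem by (induction A) auto
  show "(tl (dropWhile (\<lambda>x. x \<noteq> m) A), A) \<in> measure length"
    using A length_dropWhile_le[of "\<lambda>x. x \<noteq> m" A]
    by (cases A) auto
qed auto

definition is_perm :: "nat \<Rightarrow> nat list \<Rightarrow> bool" where
  "is_perm n \<sigma> \<longleftrightarrow> distinct \<sigma> \<and> set \<sigma> = {1..n}"

text \<open>Two-stack sortable: a permutation of {1..n}, n \<ge> 1, with S(S(\<sigma>)) = identity.
  The empty permutation is not two-stack sortable.\<close>
definition two_stack_sortable :: "nat list \<Rightarrow> bool" where
  "two_stack_sortable \<sigma> \<longleftrightarrow> length \<sigma> \<ge> 1 \<and> is_perm (length \<sigma>) \<sigma>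
     \<and> stack_sort (stack_sort \<sigma>) = [1..<length \<sigma> + 1]"

definition standardize :: "'a::linorder list \<Rightarrow> nat list" where
  "standardize A = map (\<lambda>x. card {y \<in> set A. y < x} + 1) A"

end

theory Submission
  imports Defs "HOL-Library.Sublist" "HOL-Library.Multiset"
begin

declare stack_sort.simps[simp del]

lemma decomp:
  assumes "A \<noteq> []" "m = Max (set A)"
  shows "A = takeWhile (\<lambda>x. x \<noteq> m) A @ m # tl (dropWhile (\<lambda>x. x \<noteq> m) A)"
proof -
  have mem: "m \<in> set A" using assms by simp
  have ne: "dropWhile (\<lambda>x. x \<noteq> m) A \<noteq> []" using mem by (simp add: dropWhile_eq_Nil_conv)
  have h: "hd (dropWhile (\<lambda>x. x \<noteq> m) A) = m" using hd_dropWhile[OF ne] by simp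
  obtain D where D: "dropWhile (\<lambda>x. x \<noteq> m) A = m # D"
    using ne h by (cases "dropWhile (\<lambda>x. x \<noteq> m) A") auto
  have "A = takeWhile (\<lambda>x. x \<noteq> m) A @ dropWhile (\<lambda>x. x \<noteq> m) A"
    by (rule takeWhile_dropWhile_id[symmetric])
  then show ?thesis unfolding D by simp
qed

lemma ss_nonempty:
  assumes "A \<noteq> []"
  shows "stack_sort A = stack_sort (takeWhile (\<lambda>x. x \<noteq> Max (set A)) A)
               @ stack_sort (tl (dropWhile (\<lambda>x. x \<noteq> Max (set A)) A)) @ [Max (set A)]"
  using assms by (subst stack_sort.simps) (simp add: Let_def)

lemma mset_ss: "mset (stack_sort A) = mset A"
proof (induction A rule: stack_sort.induct)
  case (1 A)
  show ?case
  proof (cases "A = []")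
    case True then show ?thesis by (simp add: stack_sort.simps)
  next
    case False
    define m where "m = Max (set A)"
    define L where "L = takeWhile (\<lambda>x. x \<noteq> m) A"
    define R where "R = tl (dropWhile (\<lambda>x. x \<noteq> m) A)"
    have d: "A = L @ m # R" unfolding L_def R_def using decomp False m_def by blast
    have IH: "mset (stack_sort L) = mset L" "mset (stack_sort R) = mset R"
      using 1 False unfolding L_def R_def m_def by auto
    have "stack_sort A = stack_sort L @ stack_sort R @ [m]"
      using ss_nonempty[OF False] unfolding L_def R_def m_def .
    then have "mset (stack_sort A) = mset L + mset R + {#m#}" using IH by simp
    also have "\<dots> = mset (L @ m # R)" by simp
    finally show ?thesis using d by metis
  qed
qed

lemma set_ss: "set (stack_sort A) = set A"
  by (metis mset_ss set_mset_mset)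

lemma subseq_set: "subseq xs ys \<Longrightarrow> z \<in> set xs \<Longrightarrow> z \<in> set ys"
  by (erule list_emb_set) auto

lemma three_split:
  "[a,b,c] = xs @ ys \<Longrightarrow> (xs = [] \<and> ys = [a,b,c]) \<or> (xs = [a] \<and> ys = [b,c]) \<or>
     (xs = [a,b] \<and> ys = [c]) \<or> (xs = [a,b,c] \<and> ys = [])"
  by (cases xs; cases "tl xs"; cases "tl (tl xs)"; auto)

lemma three_splitE:
  assumes "[a,b,c] = xs @ ys"
  obtains "xs = [] \<and> ys = [a,b,c]" | "xs = [a] \<and> ys = [b,c]" |
     "xs = [a,b] \<and> ys = [c]" | "xs = [a,b,c] \<and> ys = []"
  using three_split[OF assms] by argo

definition pat :: "'a::linorder list \<Rightarrow> bool" where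
  "pat B \<longleftrightarrow> (\<exists>a b c. subseq [a,b,c] B \<and> c < a \<and> a < b)"

lemma pat_subseq: "pat A \<Longrightarrow> subseq A B \<Longrightarrow> pat B"
  unfolding pat_def by (meson subseq_order.trans)

lemma pat_split:
  fixes m :: "'a::linorder"
  assumes "\<forall>x\<in>set L \<union> set R. x \<le> m" and mL: "m \<notin> set L"
  shows "pat (L @ m # R) \<longleftrightarrow> pat L \<or> pat R \<or> (\<exists>x\<in>set L. \<exists>y\<in>set R. y < x)"
proof
  assume "pat (L @ m # R)"
  then obtain a b c where s: "subseq [a,b,c] (L @ [m] @ R)" and o: "c < a" "a < b"
    unfolding pat_def by auto
  from s obtain xs1 xs2 where x: "[a,b,c] = xs1 @ xs2" "subseq xs1 L" "subseq xs2 ([m] @ R)"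
    by (rule subseq_appendE)
  have "\<exists>ys1 ys2. xs2 = ys1 @ ys2 \<and> subseq ys1 [m] \<and> subseq ys2 R"
    using x(3) subseq_append_iff[of xs2 "[m]" R] by simp
  then obtain ys1 ys2 where y: "xs2 = ys1 @ ys2" "subseq ys1 [m]" "subseq ys2 R"
    by blast
  have ys1: "ys1 = [] \<or> ys1 = [m]" using y(2)
    by (cases ys1) (auto split: if_splits)
  have e: "[a,b,c] = xs1 @ ys1 @ ys2" using x(1) y(1) by simp
  have inL: "\<And>z. z \<in> set xs1 \<Longrightarrow> z \<in> set L" by (rule subseq_set[OF x(2)])
  have inR: "\<And>z. z \<in> set ys2 \<Longrightarrow> z \<in> set R" by (rule subseq_set[OF y(3)])
  have sx: "subseq xs1 L" "subseq ys2 R" by fact+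
  show "pat L \<or> pat R \<or> (\<exists>x\<in>set L. \<exists>y\<in>set R. y < x)"
    using ys1
  proof
    assume "ys1 = []"
    then have "[a,b,c] = xs1 @ ys2" using e by simp
    then consider "xs1 = [] \<and> ys2 = [a,b,c]" | "xs1 = [a] \<and> ys2 = [b,c]" |
      "xs1 = [a,b] \<and> ys2 = [c]" | "xs1 = [a,b,c] \<and> ys2 = []"
      by (rule three_splitE)
    then show ?thesis
    proof cases
      case 1 then have "subseq [a,b,c] R" using sx by simp
      then have "pat R" using o unfolding pat_def by blast
      then show ?thesis by blast
    next
      case 2 then have "a \<in> set L" "c \<in> set R" using inL inR by auto
      then show ?thesis using o by blast
    next
      case 3 then have "a \<in> set L" "c \<in> set R" using inL inR by auto
      then show ?thesis using o by blast
    next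
      case 4 then have "subseq [a,b,c] L" using sx by simp
      then have "pat L" using o unfolding pat_def by blast
      then show ?thesis by blast
    qed
  next
    assume "ys1 = [m]"
    then have "[a,b,c] = xs1 @ (m # ys2)" using e by simp
    then consider "xs1 = [] \<and> m # ys2 = [a,b,c]" | "xs1 = [a] \<and> m # ys2 = [b,c]" |
      "xs1 = [a,b] \<and> m # ys2 = [c]" | "xs1 = [a,b,c] \<and> m # ys2 = []"
      by (rule three_splitE)
    then show ?thesis
    proof cases
      case 1 then have "b \<in> set R" "a = m" using inR by auto
      then show ?thesis using o assms by force
    next
      case 2 then have "a \<in> set L" "c \<in> set R" using inL inR by auto
      then show ?thesis using o by blast
    next
      case 3 then have "a \<in> set L" "c = m" using inL by auto
      then show ?thesis using o assms by force
    next
      case 4 then show ?thesis by simp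
    qed
  qed
next
  assume "pat L \<or> pat R \<or> (\<exists>x\<in>set L. \<exists>y\<in>set R. y < x)"
  then show "pat (L @ m # R)"
  proof (elim disjE)
    assume pL: "pat L"
    have "subseq L (L @ (m # R))" by (rule subseq_rev_drop_many) (rule subseq_order.order_refl)
    then show ?thesis using pat_subseq[OF pL] by blast
  next
    assume pR: "pat R"
    have "subseq R ((L @ [m]) @ R)" by (rule subseq_drop_many) (rule subseq_order.order_refl)
    then show ?thesis using pat_subseq[OF pR] by simp
  next
    assume "\<exists>x\<in>set L. \<exists>y\<in>set R. y < x"
    then obtain x y where xy: "x \<in> set L" "y \<in> set R" "y < x" by auto
    have "x \<le> m" "x \<noteq> m" using xy assms by auto
    then have "x < m" by simp
    have s1: "subseq [x] L" using xy(1) by (simp only: subseq_singleton_left)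
    have "subseq [y] R" using xy(2) by (simp only: subseq_singleton_left)
    then have s2: "subseq [m,y] (m # R)" by (intro list_emb_Cons2) (rule refl)
    have "subseq ([x] @ [m,y]) (L @ m # R)" by (rule list_emb_append_mono[OF s1 s2])
    then have "subseq [x,m,y] (L @ m # R)" by simp
    with \<open>x < m\<close> xy(3) show ?thesis unfolding pat_def by blast
  qed
qed


lemma decomp_props:
  assumes "A \<noteq> []"
  defines "m \<equiv> Max (set A)"
  defines "L \<equiv> takeWhile (\<lambda>x. x \<noteq> m) A"
  defines "R \<equiv> tl (dropWhile (\<lambda>x. x \<noteq> m) A)"
  shows "A = L @ m # R" "\<forall>x\<in>set L \<union> set R. x \<le> m"
    "stack_sort A = stack_sort L @ stack_sort R @ [m]"
proof -
  show e: "A = L @ m # R" using decomp assms by blast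
  have "\<forall>x\<in>set A. x \<le> m" using assms by simp
  then show "\<forall>x\<in>set L \<union> set R. x \<le> m" using e by (metis Un_iff set_append set_subset_Cons subsetD)
  show "stack_sort A = stack_sort L @ stack_sort R @ [m]" using ss_nonempty[OF assms(1)]
    unfolding L_def R_def m_def .
qed

lemma sorted_ss_iff: "sorted (stack_sort B) \<longleftrightarrow> \<not> pat B"
proof (induction B rule: stack_sort.induct)
  case (1 A)
  show ?case
  proof (cases "A = []")
    case True then show ?thesis by (simp add: stack_sort.simps pat_def)
  next
    case False
    define m where "m = Max (set A)"
    define L where "L = takeWhile (\<lambda>x. x \<noteq> m) A"
    define R where "R = tl (dropWhile (\<lambda>x. x \<noteq> m) A)"
    note d = decomp_props[OF False, folded m_def, folded L_def R_def]
    have mL: "m \<notin> set L" unfolding L_def using set_takeWhileD by fastforce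
    have IH: "sorted (stack_sort L) \<longleftrightarrow> \<not> pat L" "sorted (stack_sort R) \<longleftrightarrow> \<not> pat R"
      using 1 False unfolding L_def R_def m_def by auto
    have "sorted (stack_sort A) \<longleftrightarrow> sorted (stack_sort L) \<and> sorted (stack_sort R)
        \<and> (\<forall>x\<in>set L. \<forall>y\<in>set R. x \<le> y)"
      using d(2,3) by (auto simp: sorted_append set_ss)
    also have "\<dots> \<longleftrightarrow> \<not> pat A"
      using IH pat_split[OF d(2) mL] d(1) by (auto simp: not_less)
    finally show ?thesis .
  qed
qed

lemma ss_map:
  assumes "strict_mono_on (set A) f"
  shows "stack_sort (map f A) = map f (stack_sort A)"
  using assms
proof (induction A rule: stack_sort.induct)
  case (1 A)
  show ?case
  proof (cases "A = []")
    case True then show ?thesis by (simp add: stack_sort.simps)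
  next
    case False
    define m where "m = Max (set A)"
    define L where "L = takeWhile (\<lambda>x. x \<noteq> m) A"
    define R where "R = tl (dropWhile (\<lambda>x. x \<noteq> m) A)"
    note d = decomp_props[OF False, folded m_def, folded L_def R_def]
    have sm: "strict_mono_on (set A) f" by fact
    have inj: "inj_on f (set A)" using sm strict_mono_on_imp_inj_on by blast
    have mA: "m \<in> set A" using False m_def by simp
    have fm: "Max (set (map f A)) = f m"
    proof -
      have "\<forall>x\<in>set A. f x \<le> f m"
        using sm mA m_def by (metis False List.finite_set Max_ge order_le_less strict_mono_onD)
      then show ?thesis using mA by (intro Max_eqI) auto
    qed
    have mL: "m \<notin> set L" unfolding L_def using set_takeWhileD by fastforce
    have disjR: "m \<notin> set R \<or> True" by simp
    have eq: "map f A = map f L @ f m # map f R" using d(1) by (metis list.simps(9) map_append)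
    have fL: "f m \<notin> set (map f L)" using mL inj d(1) mA
      by (auto simp: inj_on_def)
    have tw: "takeWhile (\<lambda>x. x \<noteq> f m) (map f A) = map f L"
    proof -
      have "\<forall>x\<in>set (map f L). x \<noteq> f m" using fL by blast
      then show ?thesis using eq by (simp add: takeWhile_append2 takeWhile_tail)
    qed
    have dw: "tl (dropWhile (\<lambda>x. x \<noteq> f m) (map f A)) = map f R"
    proof -
      have "\<forall>x\<in>set (map f L). x \<noteq> f m" using fL by blast
      then show ?thesis using eq by (simp add: dropWhile_append2 del: set_map)
    qed
    have sub: "set L \<subseteq> set A" "set R \<subseteq> set A" using d(1) by auto
    have IH1: "stack_sort (map f L) = map f (stack_sort L)"
      using 1(1)[OF False refl] sm sub monotone_on_subset unfolding L_def m_def by blast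
    have IH2: "stack_sort (map f R) = map f (stack_sort R)"
      using 1(2)[OF False refl] sm sub monotone_on_subset unfolding R_def m_def by blast
    have ne: "map f A \<noteq> []" using False by simp
    show ?thesis using ss_nonempty[OF ne] unfolding fm tw dw IH1 IH2 d(3) by simp
  qed
qed


lemma sorted_map_mono:
  "sorted xs \<Longrightarrow> (\<forall>x\<in>set xs. \<forall>y\<in>set xs. x \<le> y \<longrightarrow> f x \<le> (f y::'b::linorder)) \<Longrightarrow> sorted (map f xs)"
  by (induction xs) auto

lemma std_tss:
  fixes A :: "nat list"
  assumes dA: "distinct A" and ne: "A \<noteq> []" and np: "\<not> pat (stack_sort A)"
  shows "two_stack_sortable (standardize A)"
proof -
  define f where "f = (\<lambda>x. card {y \<in> set A. y < x} + 1)"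
  have st: "standardize A = map f A" unfolding standardize_def f_def by simp
  have sm: "strict_mono_on (set A) f"
  proof (rule strict_mono_onI)
    fix x z assume xz: "x \<in> set A" "z \<in> set A" "x < z"
    have "{y \<in> set A. y < x} \<subset> {y \<in> set A. y < z}" using xz by auto
    then have "card {y \<in> set A. y < x} < card {y \<in> set A. y < z}"
      by (intro psubset_card_mono) auto
    then show "f x < f z" unfolding f_def by simp
  qed
  have inj: "inj_on f (set A)" using sm strict_mono_on_imp_inj_on by blast
  have rng: "f ` set A \<subseteq> {1..length A}"
  proof
    fix u assume "u \<in> f ` set A"
    then obtain x where x: "x \<in> set A" "u = f x" by blast
    have "{y \<in> set A. y < x} \<subset> set A" using x by auto
    then have "card {y \<in> set A. y < x} < card (set A)" by (intro psubset_card_mono) auto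
    then show "u \<in> {1..length A}" using x dA distinct_card unfolding f_def by fastforce
  qed
  have cardeq: "card (f ` set A) = card {1..length A}"
    using inj dA by (simp add: card_image distinct_card)
  have setf: "set (map f A) = {1..length A}"
    using card_subset_eq[OF _ rng cardeq] by simp
  have dmf: "distinct (map f A)" using dA inj by (simp add: distinct_map)
  have sSA: "set (stack_sort A) = set A" by (rule set_ss)
  have ss2: "stack_sort (stack_sort (map f A)) = map f (stack_sort (stack_sort A))"
    using ss_map[OF sm] ss_map[of "stack_sort A" f] sm sSA by simp
  have sorted0: "sorted (stack_sort (stack_sort A))" using np sorted_ss_iff by blast
  have sS2: "set (stack_sort (stack_sort A)) = set A" by (simp add: set_ss)
  have sorted1: "sorted (map f (stack_sort (stack_sort A)))"
  proof (rule sorted_map_mono[OF sorted0], intro ballI impI)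
    fix x y assume "x \<in> set (stack_sort (stack_sort A))" "y \<in> set (stack_sort (stack_sort A))" "x \<le> y"
    then show "f x \<le> f y" using sm sS2 by (metis order_le_less strict_mono_onD)
  qed
  have dist2: "distinct (stack_sort (stack_sort (map f A)))"
    using dmf mset_eq_imp_distinct_iff[of "stack_sort (stack_sort (map f A))" "map f A"]
    by (simp add: mset_ss)
  have set2: "set (stack_sort (stack_sort (map f A))) = {1..length A}"
    using setf by (simp add: set_ss)
  have "stack_sort (stack_sort (map f A)) = [1..<length A + 1]"
    apply (rule sorted_distinct_set_unique)
    using sorted1 ss2 dist2 set2 by (auto simp del: upt_Suc simp: atLeastLessThanSuc_atLeastAtMost)
  then show ?thesis unfolding two_stack_sortable_def is_perm_def st
    using ne dmf setf by (cases A) auto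
qed

theorem proposition4:
  fixes n :: nat and \<pi> \<pi>l \<pi>r :: "nat list"
  assumes "n \<ge> 1"
    and "is_perm n \<pi>"
    and "two_stack_sortable \<pi>"
    and "\<pi> = \<pi>l @ [n] @ \<pi>r"
  shows "(standardize \<pi>l = [] \<or> two_stack_sortable (standardize \<pi>l))
       \<and> (standardize \<pi>r = [] \<or> two_stack_sortable (standardize \<pi>r))"
proof -
  have dpi: "distinct \<pi>" and spi: "set \<pi> = {1..n}" using assms(2) unfolding is_perm_def by auto
  have ne: "\<pi> \<noteq> []" using assms(4) by simp
  have mx: "Max (set \<pi>) = n" unfolding spi using assms(1) by (intro Max_eqI) auto
  note d = decomp_props[OF ne, unfolded mx]
  have nl: "n \<notin> set \<pi>l" "n \<notin> set \<pi>r" using dpi assms(4) by auto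
  have ntw: "n \<notin> set (takeWhile (\<lambda>x. x \<noteq> n) \<pi>)" using set_takeWhileD by fastforce
  have eqs: "takeWhile (\<lambda>x. x \<noteq> n) \<pi> = \<pi>l \<and> tl (dropWhile (\<lambda>x. x \<noteq> n) \<pi>) = \<pi>r"
  proof -
    have "takeWhile (\<lambda>x. x \<noteq> n) \<pi> @ n # tl (dropWhile (\<lambda>x. x \<noteq> n) \<pi>) = \<pi>l @ n # \<pi>r"
      using d(1) assms(4) by simp
    then show ?thesis using append_Cons_eq_iff[OF nl(1) nl(2)] by (metis)
  qed
  have S: "stack_sort \<pi> = stack_sort \<pi>l @ stack_sort \<pi>r @ [n]" using d(3) eqs by simp
  have "sorted (stack_sort (stack_sort \<pi>))"
    using assms(3) unfolding two_stack_sortable_def by (auto simp del: upt_Suc)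
  then have np: "\<not> pat (stack_sort \<pi>)" using sorted_ss_iff by blast
  have s1: "subseq (stack_sort \<pi>l) (stack_sort \<pi>)"
    unfolding S by (rule subseq_rev_drop_many) (rule subseq_order.order_refl)
  have s2: "subseq (stack_sort \<pi>r) (stack_sort \<pi>)"
    unfolding S by (rule subseq_drop_many, rule subseq_rev_drop_many) (rule subseq_order.order_refl)
  have np1: "\<not> pat (stack_sort \<pi>l)" using np pat_subseq s1 by blast
  have np2: "\<not> pat (stack_sort \<pi>r)" using np pat_subseq s2 by blast
  have dl: "distinct \<pi>l" "distinct \<pi>r" using dpi assms(4) by auto
  show ?thesis
    using std_tss[OF dl(1) _ np1] std_tss[OF dl(2) _ np2] by (auto simp: standardize_def)
qed

end
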